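(* For $n=3$, at every point of $\mathbb C_3$ one has $\mathcal D_3+[\mathcal D_3,\mathcal D_3]=T\mathbb C_3$. More precisely, $\xi_1,\xi_2,\xi_3,[\xi_1,\xi_2],[\xi_2,\xi_3]$ span the $5$-dimensional tangent space of $\mathbb C_3$ at every point; so $\mathcal D_3$ has growth vector $(3,5)$ everywhere.
   Context: $\mathcal P_3$ is the $6$-dimensional manifold of (nondegenerate) triangles in $\mathbb R^2$. A triangle is encoded by its counterclockwise-ordered side lines $L_i=\{x\cos\alpha_i+y\sin\alpha_i=p_i\}$, $i\in\mathbb Z/3$, with $(\cos\alpha_i,\sin\alpha_i)$ the outer unit normal. For each $i$, let $C_i$ be the tangency point with $L_i$ of the excircle of the triangle opposite to the side on $L_i$. This is the circle tangent to the three lines lying on the triangle's side of $L_{i\pm1}$ and on the opposite side of $L_i$. $\xi_i$ is the vector field given by the infinitesimal counterclockwise rotation of $L_i$ about $C_i$, other sides fixed. In coordinates $\xi_i=\partial_{\alpha_i}+\Phi_i\partial_{p_i}$ with $$\Phi_i=\frac{\cos^2\!\big(\frac{\alpha_i-\alpha_{i-1}}2\big)(p_{i+1}+p_i)-\cos^2\!\big(\frac{\alpha_{i+1}-\alpha_i}2\big)(p_{i-1}+p_i)}{2\sin\!\big(\frac{\alpha_{i+1}-\alpha_{i-1}}2\big)\cos\!\big(\frac{\alpha_i-\alpha_{i-1}}2\big)\cos\!\big(\frac{\alpha_{i+1}-\alpha_i}2\big)}.$$ $\mathcal D_3=\mathrm{span}(\xi_1,\xi_2,\xi_3)$ is tangent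 to the level sets of the perimeter. $\mathbb C_3$ is a level set of the perimeter (triangles of a fixed perimeter), a $5$-dimensional manifold. *)

theory Defs
  imports "HOL-Analysis.Analysis"
begin

text \<open>Coordinates on the space of triangles: a point is a pair (alpha, p) of
  vectors indexed by the cyclic type 3 (so i+1 and i-1 are taken mod 3).
  Side i lies on the line x cos(alpha i) + y sin(alpha i) = p i, with outer
  unit normal (cos(alpha i), sin(alpha i)).\<close>

type_synonym tri = "(real^3) \<times> (real^3)"

definition tri_alpha :: "tri \<Rightarrow> 3 \<Rightarrow> real" where
  "tri_alpha z i = fst z $ i"

definition tri_p :: "tri \<Rightarrow> 3 \<Rightarrow> real" where
  "tri_p z i = snd z $ i"

text \<open>The open set P3 of nondegenerate triangles with counterclockwise ordered
  sides: consecutive outer normals turn counterclockwise by an angle in (0,pi),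
  and the triangle has an interior point.\<close>
definition is_triangle :: "tri \<Rightarrow> bool" where
  "is_triangle z \<longleftrightarrow>
     (\<forall>i::3. sin (tri_alpha z (i+1) - tri_alpha z i) > 0) \<and>
     (\<exists>x y. \<forall>i::3. x * cos (tri_alpha z i) + y * sin (tri_alpha z i) < tri_p z i)"

text \<open>Vertex L_i \<inter> L_(i+1).\<close>
definition tri_vertex :: "tri \<Rightarrow> 3 \<Rightarrow> real^2" where
  "tri_vertex z i =
     (let a = tri_alpha z i; b = tri_alpha z (i+1); p = tri_p z i; q = tri_p z (i+1)
      in vector [(p * sin b - q * sin a) / sin (b - a),
                 (q * cos a - p * cos b) / sin (b - a)])"

text \<open>Perimeter: the side on L_i joins the vertices L_(i-1)\<inter>L_i and L_i\<inter>L_(i+1).\<close>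
definition perimeter :: "tri \<Rightarrow> real" where
  "perimeter z = (\<Sum>i\<in>UNIV. dist (tri_vertex z (i - 1)) (tri_vertex z i))"

definition Phi :: "3 \<Rightarrow> tri \<Rightarrow> real" where
  "Phi i z =
     (let am = tri_alpha z (i - 1); a = tri_alpha z i; ap = tri_alpha z (i+1);
          pm = tri_p z (i - 1); p = tri_p z i; pp = tri_p z (i+1)
      in ((cos ((a - am)/2))\<^sup>2 * (pp + p) - (cos ((ap - a)/2))\<^sup>2 * (pm + p)) /
         (2 * sin ((ap - am)/2) * cos ((a - am)/2) * cos ((ap - a)/2)))"

definition xi :: "3 \<Rightarrow> tri \<Rightarrow> tri" where
  "xi i z = ((\<chi> j. if j = i then 1 else 0), (\<chi> j. if j = i then Phi i z else 0))"

definition lie_bracket :: "(tri \<Rightarrow> tri) \<Rightarrow> (tri \<Rightarrow> tri) \<Rightarrow> tri \<Rightarrow> tri" where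
  "lie_bracket X Y z = frechet_derivative Y (at z) (X z) - frechet_derivative X (at z) (Y z)"

end

theory Submission
  imports Defs
begin

lemma half_sin: "cos ((t::real)/2) \<noteq> 0 \<Longrightarrow> sin t = 2 * tan (t/2) / (1 + (tan (t/2))^2)"
proof -
  assume c: "cos (t/2) \<noteq> 0"
  have "sin t = sin (2*(t/2))" by simp
  also have "\<dots> = 2 * sin (t/2) * cos (t/2)" by (rule sin_double)
  finally show ?thesis using c unfolding tan_def
    by (simp add: field_simps power2_eq_square sin_squared_eq)
qed

lemma half_cos: "cos ((t::real)/2) \<noteq> 0 \<Longrightarrow> cos t = (1 - (tan (t/2))^2) / (1 + (tan (t/2))^2)"
proof -
  assume c: "cos (t/2) \<noteq> 0"
  have "cos t = cos (2*(t/2))" by simp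
  also have "\<dots> = (cos (t/2))^2 - (sin (t/2))^2" by (rule cos_double)
  finally show ?thesis using c unfolding tan_def
    apply (simp add: field_simps power2_eq_square)
    by algebra

qed

lemma half_pos: fixes t :: real assumes "sin t > 0" shows "cos (t/2) \<noteq> 0" "tan (t/2) > 0"
proof -
  have "sin t = sin (2*(t/2))" by simp
  also have "\<dots> = 2 * sin (t/2) * cos (t/2)" by (rule sin_double)
  finally have e: "sin t = 2 * sin (t/2) * cos (t/2)" .
  then show "cos (t/2) \<noteq> 0" using assms by auto
  have "sin (t/2) * cos (t/2) > 0" using e assms by (simp add: mult.commute)
  then show "tan (t/2) > 0" unfolding tan_def
    by (simp add: zero_less_divide_iff zero_less_mult_iff)
qed

lemma tan_constraint:
  assumes "cos h0 \<noteq> 0" "cos h1 \<noteq> 0" "cos h2 \<noteq> 0" "h0 + h1 + h2 = 0"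
  shows "tan h0 + tan h1 + tan h2 = tan h0 * tan h1 * tan h2"
proof -
  have "sin (h0 + h1 + h2) = 0" using assms(4) by simp
  then have "sin h0 * cos h1 * cos h2 + cos h0 * sin h1 * cos h2 + cos h0 * cos h1 * sin h2
     - sin h0 * sin h1 * sin h2 = 0"
    by (simp add: sin_add cos_add algebra_simps)
  then show ?thesis using assms unfolding tan_def
    by (simp add: field_simps)
qed

lemma vertex_diff:
  fixes a0 a1 a2 q0 q1 q2 :: real
  assumes "sin (a1 - a0) \<noteq> 0" "sin (a2 - a1) \<noteq> 0"
  shows "(q1 * sin a2 - q2 * sin a1) / sin (a2 - a1) - (q0 * sin a1 - q1 * sin a0) / sin (a1 - a0) = - ((q2 - q1 * cos (a2 - a1)) / sin (a2 - a1) + (q0 - q1 * cos (a1 - a0)) / sin (a1 - a0)) * sin a1"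
    and "(q2 * cos a1 - q1 * cos a2) / sin (a2 - a1) - (q1 * cos a0 - q0 * cos a1) / sin (a1 - a0) = ((q2 - q1 * cos (a2 - a1)) / sin (a2 - a1) + (q0 - q1 * cos (a1 - a0)) / sin (a1 - a0)) * cos a1"
proof -
  have s: "sin a0 ^2 + cos a0 ^2 = 1" "sin a1 ^2 + cos a1 ^2 = 1" "sin a2 ^2 + cos a2 ^2 = 1" by simp_all
  show "(q1 * sin a2 - q2 * sin a1) / sin (a2 - a1) - (q0 * sin a1 - q1 * sin a0) / sin (a1 - a0) = - ((q2 - q1 * cos (a2 - a1)) / sin (a2 - a1) + (q0 - q1 * cos (a1 - a0)) / sin (a1 - a0)) * sin a1"
    using assms unfolding sin_diff cos_diff
    apply (simp add: divide_simps) using s by algebra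
  show "(q2 * cos a1 - q1 * cos a2) / sin (a2 - a1) - (q1 * cos a0 - q0 * cos a1) / sin (a1 - a0) = ((q2 - q1 * cos (a2 - a1)) / sin (a2 - a1) + (q0 - q1 * cos (a1 - a0)) / sin (a1 - a0)) * cos a1"
    using assms unfolding sin_diff cos_diff
    apply (simp add: divide_simps) using s by algebra
qed

lemma side_pos:
  fixes a0 a1 a2 q0 q1 q2 x y :: real
  assumes "sin (a1 - a0) > 0" "sin (a2 - a1) > 0" "sin (a0 - a2) > 0"
    "x * cos a0 + y * sin a0 < q0" "x * cos a1 + y * sin a1 < q1" "x * cos a2 + y * sin a2 < q2"
  shows "(q2 - q1 * cos (a2 - a1)) / sin (a2 - a1) + (q0 - q1 * cos (a1 - a0)) / sin (a1 - a0) > 0"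
proof -
  define r0 where "r0 = q0 - (x * cos a0 + y * sin a0)"
  define r1 where "r1 = q1 - (x * cos a1 + y * sin a1)"
  define r2 where "r2 = q2 - (x * cos a2 + y * sin a2)"
  have r: "r0 > 0" "r1 > 0" "r2 > 0" using assms unfolding r0_def r1_def r2_def by auto
  have s: "sin a0 ^2 + cos a0 ^2 = 1" "sin a1 ^2 + cos a1 ^2 = 1" "sin a2 ^2 + cos a2 ^2 = 1" by simp_all
  have "(q2 - q1 * cos (a2 - a1)) / sin (a2 - a1) + (q0 - q1 * cos (a1 - a0)) / sin (a1 - a0)
     = r2 / sin (a2 - a1) + r0 / sin (a1 - a0) + r1 * sin (a0 - a2) / (sin (a2 - a1) * sin (a1 - a0))"
    using assms(1,2) unfolding r0_def r1_def r2_def sin_diff cos_diff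
    apply (simp add: divide_simps)
    using s by algebra
  also have "\<dots> > 0" using r assms(1-3) by (intro add_pos_pos divide_pos_pos mult_pos_pos) auto
  finally show ?thesis .
qed

lemma pos_comb:
  fixes a0 a1 a2 q0 q1 q2 x y :: real
  assumes "sin (a1 - a0) > 0" "sin (a2 - a1) > 0" "sin (a0 - a2) > 0"
    "x * cos a0 + y * sin a0 < q0" "x * cos a1 + y * sin a1 < q1" "x * cos a2 + y * sin a2 < q2"
  shows "sin (a2 - a1) * q0 + sin (a0 - a2) * q1 + sin (a1 - a0) * q2 > 0"
proof -
  have "sin (a2 - a1) * (x * cos a0 + y * sin a0) + sin (a0 - a2) * (x * cos a1 + y * sin a1)
      + sin (a1 - a0) * (x * cos a2 + y * sin a2) = 0"
    unfolding sin_diff by (simp add: algebra_simps)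
  moreover have "sin (a2 - a1) * (x * cos a0 + y * sin a0) < sin (a2 - a1) * q0"
      "sin (a0 - a2) * (x * cos a1 + y * sin a1) < sin (a0 - a2) * q1"
      "sin (a1 - a0) * (x * cos a2 + y * sin a2) < sin (a1 - a0) * q2"
    using assms by (auto intro: mult_strict_left_mono)
  ultimately show ?thesis by linarith
qed


definition th :: "tri \<Rightarrow> 3 \<Rightarrow> real" where
  "th w k = tri_alpha w k - tri_alpha w (k - 1)"
definition TT :: "tri \<Rightarrow> 3 \<Rightarrow> real" where
  "TT w k = tan (th w k / 2)"
definition UU :: "tri \<Rightarrow> 3 \<Rightarrow> real" where
  "UU w k = 1 + (TT w k)^2"
definition gf :: "real \<Rightarrow> real \<Rightarrow> real \<Rightarrow> real \<Rightarrow> real \<Rightarrow> real" where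
  "gf a b x y zz = ((1+b^2)*(zz+y) - (1+a^2)*(x+y)) / (2*(a+b))"
definition Psi :: "3 \<Rightarrow> tri \<Rightarrow> real" where
  "Psi k w = gf (TT w k) (TT w (k+1)) (tri_p w (k-1)) (tri_p w k) (tri_p w (k+1))"

lemma aux_frac:
  fixes cu cv D :: real
  assumes "cu \<noteq> 0" "cv \<noteq> 0" "D \<noteq> 0"
  shows "(cu^2 * (pp + p) - cv^2 * (pm + p)) / (2 * D * cu * cv)
     = ((1 / cv^2)*(pp+p) - (1 / cu^2)*(pm+p)) / (2*(D / (cu * cv)))"
  using assms by (simp add: field_simps power2_eq_square)

lemma gf_trig:
  assumes "cos u \<noteq> 0" "cos v \<noteq> 0"
  shows "((cos u)\<^sup>2 * (pp + p) - (cos v)\<^sup>2 * (pm + p)) / (2 * sin (u+v) * cos u * cos v)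
         = gf (tan u) (tan v) pm p pp"
proof (cases "sin u * cos v + cos u * sin v = 0")
  case True
  have "tan u + tan v = 0" unfolding tan_def using assms True
    by (simp add: field_simps)
  then show ?thesis using True unfolding gf_def sin_add by simp
next
  case False
  have su: "(sin u)^2 = 1 - (cos u)^2" and sv: "(sin v)^2 = 1 - (cos v)^2"
    by (simp_all add: sin_squared_eq)
  have e1: "tan u + tan v = (sin u * cos v + cos u * sin v) / (cos u * cos v)"
    unfolding tan_def using assms by (simp add: field_simps)
  have e2: "1 + (tan u)^2 = 1 / (cos u)^2" and e3: "1 + (tan v)^2 = 1 / (cos v)^2"
    unfolding tan_def using assms su sv by (simp_all add: field_simps)
  have "gf (tan u) (tan v) pm p pp = ((1 / (cos v)^2)*(pp+p) - (1 / (cos u)^2)*(pm+p))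
        / (2*((sin u * cos v + cos u * sin v) / (cos u * cos v)))"
    unfolding gf_def by (simp only: e1 e2 e3)
  then show ?thesis
    unfolding sin_add using aux_frac[OF assms False] by simp
qed

lemma Phi_Psi:
  assumes "cos (th w k / 2) \<noteq> 0" "cos (th w (k+1) / 2) \<noteq> 0"
  shows "Phi k w = Psi k w"
proof -
  let ?am = "tri_alpha w (k-1)" and ?a = "tri_alpha w k" and ?ap = "tri_alpha w (k+1)"
  have e: "(?ap - ?am)/2 = (?a - ?am)/2 + (?ap - ?a)/2" by (simp add: field_simps)
  show ?thesis
    unfolding Phi_def Let_def Psi_def TT_def e
    using gf_trig[of "(?a - ?am)/2" "(?ap - ?a)/2"] assms unfolding th_def by simp
qed

definition Ngf :: "real \<Rightarrow> real \<Rightarrow> real \<Rightarrow> real \<Rightarrow> real \<Rightarrow> real" where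
  "Ngf a b x y zz = (1+b^2)*(zz+y) - (1+a^2)*(x+y)"
definition ga :: "real \<Rightarrow> real \<Rightarrow> real \<Rightarrow> real \<Rightarrow> real \<Rightarrow> real" where
  "ga a b x y zz = (-2*a*(x+y)*(a+b) - Ngf a b x y zz) / (2*(a+b)^2)"
definition gb :: "real \<Rightarrow> real \<Rightarrow> real \<Rightarrow> real \<Rightarrow> real \<Rightarrow> real" where
  "gb a b x y zz = (2*b*(zz+y)*(a+b) - Ngf a b x y zz) / (2*(a+b)^2)"

lemma hd_gf:
  fixes f1 f2 f3 f4 f5 :: "tri \<Rightarrow> real"
  assumes "(f1 has_derivative f1') F" "(f2 has_derivative f2') F" "(f3 has_derivative f3') F"
    "(f4 has_derivative f4') F" "(f5 has_derivative f5') F" "F = at z within S"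
    "f1 z + f2 z \<noteq> 0"
  shows "((\<lambda>w. gf (f1 w) (f2 w) (f3 w) (f4 w) (f5 w)) has_derivative
     (\<lambda>v. ga (f1 z) (f2 z) (f3 z) (f4 z) (f5 z) * f1' v + gb (f1 z) (f2 z) (f3 z) (f4 z) (f5 z) * f2' v
        - (1 + (f1 z)^2) / (2*(f1 z + f2 z)) * f3' v + (f2 z - f1 z)/2 * f4' v
        + (1 + (f2 z)^2) / (2*(f1 z + f2 z)) * f5' v)) F"
  unfolding gf_def assms(6)
  apply (rule has_derivative_eq_rhs)
   apply (rule derivative_intros assms[unfolded assms(6)])+
  using assms(7) apply simp
  apply (rule ext)
  using assms(7) unfolding ga_def gb_def Ngf_def
  apply (simp add: divide_simps power2_eq_square)
  apply algebra
  done

lemma hd_alpha: "((\<lambda>w. tri_alpha w k) has_derivative (\<lambda>v. tri_alpha v k)) (at z within S)"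
  unfolding tri_alpha_def
  by (rule bounded_linear_imp_has_derivative, rule bounded_linear_compose[OF bounded_linear_vec_nth bounded_linear_fst])

lemma hd_p: "((\<lambda>w. tri_p w k) has_derivative (\<lambda>v. tri_p v k)) (at z within S)"
  unfolding tri_p_def
  by (rule bounded_linear_imp_has_derivative, rule bounded_linear_compose[OF bounded_linear_vec_nth bounded_linear_snd])

lemma tan_sq: "cos x \<noteq> 0 \<Longrightarrow> 1 + (tan x)^2 = inverse ((cos x)^2)"
  unfolding tan_def by (simp add: field_simps sin_squared_eq)

lemma hd_TT:
  assumes "cos (th z k / 2) \<noteq> 0"
  shows "((\<lambda>w. TT w k) has_derivative (\<lambda>v. UU z k / 2 * (tri_alpha v k - tri_alpha v (k-1)))) (at z within S)"
  unfolding TT_def th_def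
  apply (rule has_derivative_eq_rhs)
   apply (rule derivative_intros)
    using assms apply (simp add: th_def)
   apply (rule derivative_intros hd_alpha)+
   apply simp
  apply (rule ext)
  using tan_sq[OF assms] unfolding UU_def TT_def th_def
  apply (simp add: field_simps)
  done


definition Xf :: "real \<Rightarrow> real \<Rightarrow> real \<Rightarrow> real \<Rightarrow> real \<Rightarrow> real \<Rightarrow> real" where
  "Xf t0 t1 t2 p0 p1 p2 = -(1+t1^2)/2 * ga t1 t2 p0 p1 p2 - (1+t1^2)/(2*(t1+t2)) * gf t0 t1 p2 p0 p1"
definition Yf :: "real \<Rightarrow> real \<Rightarrow> real \<Rightarrow> real \<Rightarrow> real \<Rightarrow> real \<Rightarrow> real" where
  "Yf t0 t1 t2 p0 p1 p2 = (1+t1^2)/2 * gb t0 t1 p2 p0 p1 + (1+t1^2)/(2*(t0+t1)) * gf t1 t2 p0 p1 p2"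

lemma XY_rel:
  assumes "t0 + t1 \<noteq> 0" "t1 + t2 \<noteq> 0"
  shows "(t1+t2) * Xf t0 t1 t2 p0 p1 p2 = (t0+t1) * Yf t0 t1 t2 p0 p1 p2"
  using assms unfolding Xf_def Yf_def ga_def gb_def gf_def Ngf_def
  by (simp add: divide_simps power2_eq_square) algebra

lemma X_formula:
  assumes "t0 > 0" "t1 > 0" "t2 > 0" "t0 + t1 + t2 = t0*t1*t2"
  shows "Xf t0 t1 t2 p0 p1 p2 * (2*(t1+t2) * (2*t0/(1+t0^2) + 2*t1/(1+t1^2) + 2*t2/(1+t2^2)))
     = (1+t1^2)*(t0+t2) * (2*t2/(1+t2^2) * p0 + 2*t0/(1+t0^2) * p1 + 2*t1/(1+t1^2) * p2)"
proof -
  have d: "1 + t0^2 > 0" "1+t1^2 > 0" "1+t2^2>0" by (auto simp: add_pos_nonneg)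
  show ?thesis
  using assms d unfolding Xf_def Yf_def ga_def gb_def gf_def Ngf_def
  by (simp add: divide_simps power2_eq_square) algebra
qed


lemma tri_sin: "is_triangle w \<Longrightarrow> sin (th w k) > 0"
  unfolding is_triangle_def th_def
  by (metis diff_add_cancel)

lemma tri_cos: "is_triangle w \<Longrightarrow> cos (th w k / 2) \<noteq> 0"
  using half_pos(1)[OF tri_sin] .

lemma tri_TT: "is_triangle w \<Longrightarrow> TT w k > 0"
  unfolding TT_def using half_pos(2)[OF tri_sin] .

lemma n4: "(4::3) = 1" by simp
lemma n0: "(0::3) = 3" by simp
lemma n5: "(5::3) = 2" by simp
lemmas nums3 = n4 n0 n5

lemma two3: "(2::3) \<noteq> 0" by simp

lemma idx1: "(k::3) + 1 + 1 = k + 2" by simp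
lemma idx2: "(k::3) + 2 = k - 1"
proof -
  have "(k::3) - 1 = k + 1 + 1" by simp
  then show ?thesis by (simp add: idx1)
qed
lemma idx3: "(k::3) + 2 \<noteq> k"
proof
  assume "k + 2 = k"
  then have "(2::3) = 0" by (metis add_cancel_right_right)
  then show False by simp
qed

lemma idx4: "(k::3) + 2 - 1 = k + 1" using exhaust_3[of k] by auto
lemma th2: "th w (k+2) = tri_alpha w (k-1) - tri_alpha w (k+1)"
  unfolding th_def idx4 by (simp only: idx2)

lemma idx5: "(k::3) - 1 - 1 = k + 1" using exhaust_3[of k] by auto
lemma idx6: "(k::3) + 1 + 1 = k - 1" using exhaust_3[of k] by auto
lemma neq1: "(k::3) + 1 \<noteq> k" "k \<noteq> k + 1" "k - 1 \<noteq> k" "k \<noteq> k - 1" "k + 1 \<noteq> k - 1" "k - 1 \<noteq> k + 1"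
  using exhaust_3[of k] by auto
lemma th_m1: "th w (k-1) = tri_alpha w (k-1) - tri_alpha w (k+1)"
  unfolding th_def idx5 ..

lemma tri_constraint: "is_triangle w \<Longrightarrow>
   TT w k + TT w (k+1) + TT w (k+2) = TT w k * TT w (k+1) * TT w (k+2)"
  unfolding TT_def
  apply (rule tan_constraint)
  apply (simp_all add: tri_cos)
  apply (subgoal_tac "th w k + th w (k+1) + th w (k+2) = 0")
   apply (simp add: add_divide_distrib[symmetric])
  using th2[of w k] by (simp add: th_def)


definition Lf :: "real \<Rightarrow> real \<Rightarrow> real \<Rightarrow> real \<Rightarrow> real \<Rightarrow> real" where
  "Lf a b x y zz = (zz*(1+b^2) - y*(1-b^2))/(2*b) + (x*(1+a^2) - y*(1-a^2))/(2*a)"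

lemma Lf_trig:
  fixes a b :: real
  assumes "a > 0" "b > 0"
  shows "(q2 - q1 * ((1 - b^2) / (1 + b^2))) / (2 * b / (1 + b^2))
       + (q0 - q1 * ((1 - a^2) / (1 + a^2))) / (2 * a / (1 + a^2)) = Lf a b q0 q1 q2"
proof -
  have p: "1 + a^2 > 0" "1 + b^2 > 0" by (auto simp: add_pos_nonneg)
  have p': "1 + a^2 \<noteq> 0" "1 + b^2 \<noteq> 0" using p by auto
  show ?thesis unfolding Lf_def using assms p'
    by (simp add: divide_simps)
qed

lemma th1: "th w (k+1) = tri_alpha w (k+1) - tri_alpha w k"
  unfolding th_def by simp

lemma side_dist:
  assumes tri: "is_triangle w"
  shows "dist (tri_vertex w (k-1)) (tri_vertex w k)
     = Lf (TT w k) (TT w (k+1)) (tri_p w (k-1)) (tri_p w k) (tri_p w (k+1))"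
proof -
  obtain x y where xy: "\<And>i. x * cos (tri_alpha w i) + y * sin (tri_alpha w i) < tri_p w i"
    using tri unfolding is_triangle_def by blast
  define a0 where "a0 = tri_alpha w (k-1)"
  define a1 where "a1 = tri_alpha w k"
  define a2 where "a2 = tri_alpha w (k+1)"
  define q0 where "q0 = tri_p w (k-1)"
  define q1 where "q1 = tri_p w k"
  define q2 where "q2 = tri_p w (k+1)"
  have s1: "sin (a1 - a0) > 0" using tri_sin[OF tri, of k] unfolding th_def a0_def a1_def .
  have s2: "sin (a2 - a1) > 0" using tri_sin[OF tri, of "k+1"] unfolding th1 a2_def a1_def .
  have s3: "sin (a0 - a2) > 0" using tri_sin[OF tri, of "k+2"] unfolding th2 a2_def a0_def .
  define L where "L = (q2 - q1 * cos (a2 - a1)) / sin (a2 - a1) + (q0 - q1 * cos (a1 - a0)) / sin (a1 - a0)"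
  have Lpos: "L > 0" unfolding L_def
    by (rule side_pos[OF s1 s2 s3]) (use xy in \<open>auto simp: a0_def a1_def a2_def q0_def q1_def q2_def\<close>)
  have v1: "tri_vertex w (k-1) = vector [(q0 * sin a1 - q1 * sin a0) / sin (a1 - a0),
                 (q1 * cos a0 - q0 * cos a1) / sin (a1 - a0)]"
    unfolding tri_vertex_def Let_def a0_def a1_def q0_def q1_def by simp
  have v2: "tri_vertex w k = vector [(q1 * sin a2 - q2 * sin a1) / sin (a2 - a1),
                 (q2 * cos a1 - q1 * cos a2) / sin (a2 - a1)]"
    unfolding tri_vertex_def Let_def a2_def a1_def q2_def q1_def by simp
  have d1: "(q1 * sin a2 - q2 * sin a1) / sin (a2 - a1) - (q0 * sin a1 - q1 * sin a0) / sin (a1 - a0) = - L * sin a1"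
    unfolding L_def using vertex_diff(1)[of a1 a0 a2] s1 s2 by simp
  have d2: "(q2 * cos a1 - q1 * cos a2) / sin (a2 - a1) - (q1 * cos a0 - q0 * cos a1) / sin (a1 - a0) = L * cos a1"
    unfolding L_def using vertex_diff(2)[of a1 a0 a2] s1 s2 by simp
  have "dist (tri_vertex w (k-1)) (tri_vertex w k)
      = sqrt ((- L * sin a1)^2 + (L * cos a1)^2)"
  proof -
    have d1': "(q0 * sin a1 - q1 * sin a0) / sin (a1 - a0) - (q1 * sin a2 - q2 * sin a1) / sin (a2 - a1) = L * sin a1"
      using d1 by linarith
    have d2': "(q1 * cos a0 - q0 * cos a1) / sin (a1 - a0) - (q2 * cos a1 - q1 * cos a2) / sin (a2 - a1) = - (L * cos a1)"
      using d2 by linarith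
    show ?thesis
      unfolding dist_vec_def L2_set_def sum_2 v1 v2 dist_real_def vector_2 power2_abs d1' d2'
      by simp
  qed
  also have "\<dots> = sqrt (L^2)"
    by (simp add: power_mult_distrib algebra_simps flip: distrib_left)
  also have "\<dots> = L" using Lpos by simp
  also have "L = Lf (TT w k) (TT w (k+1)) q0 q1 q2"
  proof -
    have c1: "cos (th w k / 2) \<noteq> 0" "cos (th w (k+1) / 2) \<noteq> 0" using tri_cos[OF tri] by auto
    have t1: "TT w k > 0" "TT w (k+1) > 0" using tri_TT[OF tri] by auto
    have e1: "sin (a1 - a0) = 2 * TT w k / (1 + (TT w k)^2)" "cos (a1 - a0) = (1 - (TT w k)^2) / (1 + (TT w k)^2)"
      using half_sin[OF c1(1)] half_cos[OF c1(1)] unfolding TT_def th_def a0_def a1_def by auto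
    have e2: "sin (a2 - a1) = 2 * TT w (k+1) / (1 + (TT w (k+1))^2)" "cos (a2 - a1) = (1 - (TT w (k+1))^2) / (1 + (TT w (k+1))^2)"
      using half_sin[OF c1(2)] half_cos[OF c1(2)] unfolding TT_def th1 a2_def a1_def by auto
    show ?thesis unfolding L_def e1 e2 using Lf_trig[OF t1] by simp
  qed
  finally show ?thesis unfolding q0_def q1_def q2_def .
qed

lemma perim_eq:
  assumes tri: "is_triangle w"
  shows "perimeter w = (\<Sum>k\<in>UNIV. TT w k * (tri_p w k + tri_p w (k-1)))"
proof -
  have "perimeter w = (\<Sum>k\<in>UNIV. Lf (TT w k) (TT w (k+1)) (tri_p w (k-1)) (tri_p w k) (tri_p w (k+1)))"
    unfolding perimeter_def using side_dist[OF tri] by simp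
  also have "\<dots> = (\<Sum>k\<in>UNIV. TT w k * (tri_p w k + tri_p w (k-1)))"
  proof -
    have t: "TT w 1 > 0" "TT w 2 > 0" "TT w 3 > 0" using tri_TT[OF tri] by auto
    show ?thesis unfolding sum_3 Lf_def using t
      by (simp add: field_simps power2_eq_square nums3)
  qed
  finally show ?thesis .
qed


lemma tendsto_alpha[tendsto_intros]: "((\<lambda>w. tri_alpha w k) \<longlongrightarrow> tri_alpha z k) (at z within S)"
  unfolding tri_alpha_def by (intro tendsto_intros)

lemma tendsto_p[tendsto_intros]: "((\<lambda>w. tri_p w k) \<longlongrightarrow> tri_p z k) (at z within S)"
  unfolding tri_p_def by (intro tendsto_intros)

lemma ev_tri:
  assumes tri: "is_triangle z"
  shows "eventually is_triangle (at z)"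
proof -
  obtain x y where xy: "\<And>i. x * cos (tri_alpha z i) + y * sin (tri_alpha z i) < tri_p z i"
    using tri unfolding is_triangle_def by blast
  have s: "\<And>i. sin (tri_alpha z (i+1) - tri_alpha z i) > 0"
    using tri unfolding is_triangle_def by blast
  have e1: "eventually (\<lambda>w. \<forall>i. 0 < sin (tri_alpha w (i+1) - tri_alpha w i)) (at z)"
  proof (rule eventually_all_finite)
    fix i :: 3
    have "((\<lambda>w. sin (tri_alpha w (i+1) - tri_alpha w i)) \<longlongrightarrow> sin (tri_alpha z (i+1) - tri_alpha z i)) (at z)"
      by (intro tendsto_intros)
    then show "eventually (\<lambda>w. 0 < sin (tri_alpha w (i+1) - tri_alpha w i)) (at z)"
      using s order_tendstoD(1) by blast
  qed
  have e2: "eventually (\<lambda>w. \<forall>i. 0 < tri_p w i - (x * cos (tri_alpha w i) + y * sin (tri_alpha w i))) (at z)"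
  proof (rule eventually_all_finite)
    fix i :: 3
    have "((\<lambda>w. tri_p w i - (x * cos (tri_alpha w i) + y * sin (tri_alpha w i))) \<longlongrightarrow>
        tri_p z i - (x * cos (tri_alpha z i) + y * sin (tri_alpha z i))) (at z)"
      by (intro tendsto_intros)
    moreover have "0 < tri_p z i - (x * cos (tri_alpha z i) + y * sin (tri_alpha z i))" using xy[of i] by simp
    ultimately show "eventually (\<lambda>w. 0 < tri_p w i - (x * cos (tri_alpha w i) + y * sin (tri_alpha w i))) (at z)"
      using order_tendstoD(1) by blast
  qed
  show ?thesis
    using eventually_conj[OF e1 e2]
    by (rule eventually_mono) (auto simp: is_triangle_def)
qed

definition Fp :: "tri \<Rightarrow> real" where
  "Fp w = (\<Sum>k\<in>UNIV. TT w k * (tri_p w k + tri_p w (k-1)))"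

definition aa :: "tri \<Rightarrow> tri" where
  "aa z = ((\<chi> k. UU z k / 2 * (tri_p z k + tri_p z (k-1)) - UU z (k+1) / 2 * (tri_p z (k+1) + tri_p z k)),
           (\<chi> k. TT z k + TT z (k+1)))"

lemma hd_F:
  assumes tri: "is_triangle z"
  shows "(Fp has_derivative (\<lambda>v. aa z \<bullet> v)) (at z)"
proof -
  have c: "cos (th z 1 / 2) \<noteq> 0" "cos (th z 2 / 2) \<noteq> 0" "cos (th z 3 / 2) \<noteq> 0"
    using tri_cos[OF tri] by auto
  have F3: "Fp = (\<lambda>w. TT w 1 * (tri_p w 1 + tri_p w 3) + TT w 2 * (tri_p w 2 + tri_p w 1)
       + TT w 3 * (tri_p w 3 + tri_p w 2))"
    unfolding Fp_def sum_3 by (simp add: nums3)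
  show ?thesis
    unfolding F3
    apply (rule has_derivative_eq_rhs)
     apply (rule derivative_intros hd_TT[OF c(1)] hd_TT[OF c(2)] hd_TT[OF c(3)] hd_p)+
    apply (rule ext)
    unfolding aa_def inner_prod_def inner_vec_def sum_3 tri_alpha_def tri_p_def
    apply (simp add: nums3 field_simps)
    done
qed

lemma hd_perim:
  assumes tri: "is_triangle z"
  shows "(perimeter has_derivative (\<lambda>v. aa z \<bullet> v)) (at z)"
proof (rule has_derivative_transform_eventually[OF hd_F[OF tri]])
  show "\<forall>\<^sub>F x' in at z within UNIV. Fp x' = perimeter x'"
    using ev_tri[OF tri] by (rule eventually_mono) (simp add: perim_eq Fp_def)
  show "Fp z = perimeter z" by (simp add: perim_eq[OF tri] Fp_def)
qed simp


definition dPsi :: "3 \<Rightarrow> tri \<Rightarrow> tri \<Rightarrow> real" where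
  "dPsi k z v =
     ga (TT z k) (TT z (k+1)) (tri_p z (k-1)) (tri_p z k) (tri_p z (k+1)) * (UU z k / 2 * (tri_alpha v k - tri_alpha v (k-1)))
   + gb (TT z k) (TT z (k+1)) (tri_p z (k-1)) (tri_p z k) (tri_p z (k+1)) * (UU z (k+1) / 2 * (tri_alpha v (k+1) - tri_alpha v k))
   - (1 + (TT z k)^2) / (2*(TT z k + TT z (k+1))) * tri_p v (k-1)
   + (TT z (k+1) - TT z k) / 2 * tri_p v k
   + (1 + (TT z (k+1))^2) / (2*(TT z k + TT z (k+1))) * tri_p v (k+1)"

lemma hd_Psi:
  assumes c1: "cos (th z k / 2) \<noteq> 0" and c2: "cos (th z (k+1) / 2) \<noteq> 0"
    and s: "TT z k + TT z (k+1) \<noteq> 0"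
  shows "(Psi k has_derivative dPsi k z) (at z)"
proof -
  have e: "Psi k = (\<lambda>w. gf (TT w k) (TT w (k+1)) (tri_p w (k-1)) (tri_p w k) (tri_p w (k+1)))"
    by (rule ext) (simp add: Psi_def)
  show ?thesis unfolding e
    apply (rule has_derivative_eq_rhs)
     apply (rule hd_gf[OF hd_TT[OF c1] hd_TT[OF c2] hd_p hd_p hd_p refl s])
    apply (rule ext)
    apply (simp add: dPsi_def two3)
    done
qed

lemma ev_cos:
  assumes "cos (th z k / 2) \<noteq> 0"
  shows "eventually (\<lambda>w. cos (th w k / 2) \<noteq> 0) (at z)"
proof -
  have "((\<lambda>w. cos (th w k / 2)) \<longlongrightarrow> cos (th z k / 2)) (at z)"
    unfolding th_def by (auto intro!: tendsto_intros)
  then show ?thesis using assms tendsto_imp_eventually_ne by blast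
qed

lemma xi_eq: "xi k w = (axis k 1, Phi k w *\<^sub>R axis k 1)"
  unfolding xi_def by (simp add: vec_eq_iff axis_def)

lemma hd_xi:
  assumes c1: "cos (th z k / 2) \<noteq> 0" and c2: "cos (th z (k+1) / 2) \<noteq> 0"
    and s: "TT z k + TT z (k+1) \<noteq> 0"
  shows "(xi k has_derivative (\<lambda>v. (0, dPsi k z v *\<^sub>R axis k 1))) (at z)"
proof -
  have h: "((\<lambda>w. (axis k 1, Psi k w *\<^sub>R axis k 1)) has_derivative (\<lambda>v. (0, dPsi k z v *\<^sub>R axis k 1))) (at z)"
    apply (rule has_derivative_eq_rhs)
     apply (rule derivative_intros hd_Psi[OF c1 c2 s])+
    apply (simp add: zero_prod_def)
    done
  show ?thesis
  proof (rule has_derivative_transform_eventually[OF h])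
    show "\<forall>\<^sub>F x' in at z within UNIV. (axis k 1, Psi k x' *\<^sub>R axis k 1) = xi k x'"
      using eventually_conj[OF ev_cos[OF c1] ev_cos[OF c2]]
      by (rule eventually_mono) (simp add: xi_eq Phi_Psi)
    show "(axis k 1, Psi k z *\<^sub>R axis k 1) = xi k z" by (simp add: xi_eq Phi_Psi c1 c2)
  qed simp
qed

lemma bracket:
  assumes c0: "cos (th z i / 2) \<noteq> 0" and c1: "cos (th z (i+1) / 2) \<noteq> 0"
    and c2: "cos (th z (i-1) / 2) \<noteq> 0"
    and s0: "TT z i + TT z (i+1) \<noteq> 0" and s1: "TT z (i+1) + TT z (i-1) \<noteq> 0"
  shows "lie_bracket (xi i) (xi (i+1)) z =
     (0, Xf (TT z i) (TT z (i+1)) (TT z (i-1)) (tri_p z i) (tri_p z (i+1)) (tri_p z (i-1)) *\<^sub>R axis (i+1) 1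
       - Yf (TT z i) (TT z (i+1)) (TT z (i-1)) (tri_p z i) (tri_p z (i+1)) (tri_p z (i-1)) *\<^sub>R axis i 1)"
proof -
  have c2': "cos (th z (i+1+1) / 2) \<noteq> 0" unfolding idx6 by (rule c2)
  have s1': "TT z (i+1) + TT z (i+1+1) \<noteq> 0" unfolding idx6 by (rule s1)
  have D1: "frechet_derivative (xi i) (at z) = (\<lambda>v. (0, dPsi i z v *\<^sub>R axis i 1))"
    using frechet_derivative_at[OF hd_xi[OF c0 c1 s0]] by simp
  have D2: "frechet_derivative (xi (i+1)) (at z) = (\<lambda>v. (0, dPsi (i+1) z v *\<^sub>R axis (i+1) 1))"
    using frechet_derivative_at[OF hd_xi[OF c1 c2' s1']] by simp
  have X: "dPsi (i+1) z (xi i z) = Xf (TT z i) (TT z (i+1)) (TT z (i-1)) (tri_p z i) (tri_p z (i+1)) (tri_p z (i-1))"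
    unfolding dPsi_def Xf_def xi_eq Phi_Psi[OF c0 c1] Psi_def UU_def
    by (simp add: axis_def tri_alpha_def tri_p_def idx6 neq1) (simp add: algebra_simps)
  have Y: "dPsi i z (xi (i+1) z) = Yf (TT z i) (TT z (i+1)) (TT z (i-1)) (tri_p z i) (tri_p z (i+1)) (tri_p z (i-1))"
    unfolding dPsi_def Yf_def xi_eq Phi_Psi[OF c1 c2'] Psi_def UU_def
    by (simp add: axis_def tri_alpha_def tri_p_def idx6 neq1)
  show ?thesis
    unfolding lie_bracket_def D1 D2 X Y by simp
qed


lemma gf_tangent:
  fixes a b :: real
  assumes "a + b \<noteq> 0"
  shows "(1+a^2)/2*(y+x) - (1+b^2)/2*(zz+y) + (a+b) * gf a b x y zz = 0"
  using assms unfolding gf_def by (simp add: field_simps)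

lemma aa_xi:
  assumes tri: "is_triangle z"
  shows "aa z \<bullet> xi k z = 0"
proof -
  have c: "cos (th z k / 2) \<noteq> 0" "cos (th z (k+1) / 2) \<noteq> 0" using tri_cos[OF tri] by auto
  have s: "TT z k + TT z (k+1) \<noteq> 0" using tri_TT[OF tri, of k] tri_TT[OF tri, of "k+1"] by simp
  have "aa z \<bullet> xi k z = UU z k / 2 * (tri_p z k + tri_p z (k-1)) - UU z (k+1) / 2 * (tri_p z (k+1) + tri_p z k)
      + (TT z k + TT z (k+1)) * Phi k z"
    unfolding xi_eq inner_prod_def aa_def by (simp add: inner_axis)
  also have "\<dots> = 0" unfolding Phi_Psi[OF c] Psi_def UU_def
    using gf_tangent[OF s, where x = "tri_p z (k-1)" and y = "tri_p z k" and zz = "tri_p z (k+1)"] by (simp add: algebra_simps)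
  finally show ?thesis .
qed

lemma aa_br:
  "aa z \<bullet> (0, X *\<^sub>R axis (i+1) 1 - Y *\<^sub>R axis i 1)
     = (TT z (i+1) + TT z (i-1)) * X - (TT z i + TT z (i+1)) * Y"
  unfolding inner_prod_def aa_def by (simp add: inner_axis inner_diff_right idx6 idx2 algebra_simps)

lemma X_pos:
  assumes tri: "is_triangle z"
  shows "Xf (TT z i) (TT z (i+1)) (TT z (i-1)) (tri_p z i) (tri_p z (i+1)) (tri_p z (i-1)) > 0"
proof -
  define t0 where "t0 = TT z i"
  define t1 where "t1 = TT z (i+1)"
  define t2 where "t2 = TT z (i-1)"
  have t: "t0 > 0" "t1 > 0" "t2 > 0" unfolding t0_def t1_def t2_def using tri_TT[OF tri] by auto
  have con: "t0 + t1 + t2 = t0 * t1 * t2"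
    using tri_constraint[OF tri, of i] unfolding t0_def t1_def t2_def idx2 .
  have u: "1 + t0^2 > 0" "1 + t1^2 > 0" "1 + t2^2 > 0" by (auto simp: add_pos_nonneg)
  obtain x y where xy: "\<And>i. x * cos (tri_alpha z i) + y * sin (tri_alpha z i) < tri_p z i"
    using tri unfolding is_triangle_def by blast
  have sn0: "2 * t0 / (1 + t0^2) = sin (tri_alpha z i - tri_alpha z (i-1))"
    unfolding t0_def TT_def using half_sin[OF tri_cos[OF tri, of i]] by (simp add: th_def)
  have sn1: "2 * t1 / (1 + t1^2) = sin (tri_alpha z (i+1) - tri_alpha z i)"
    unfolding t1_def TT_def using half_sin[OF tri_cos[OF tri, of "i+1"]] by (simp add: th1)
  have sn2: "2 * t2 / (1 + t2^2) = sin (tri_alpha z (i-1) - tri_alpha z (i+1))"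
    unfolding t2_def TT_def using half_sin[OF tri_cos[OF tri, of "i-1"]] by (simp add: th_m1)
  have S: "2*t2/(1+t2^2) * tri_p z i + 2*t0/(1+t0^2) * tri_p z (i+1) + 2*t1/(1+t1^2) * tri_p z (i-1) > 0"
    unfolding sn0 sn1 sn2
    apply (rule pos_comb)
    using tri_sin[OF tri, of "i+1", unfolded th1] tri_sin[OF tri, of "i-1", unfolded th_m1]
      tri_sin[OF tri, of i, unfolded th_def] xy
    by auto
  have M: "2*(t1+t2) * (2*t0/(1+t0^2) + 2*t1/(1+t1^2) + 2*t2/(1+t2^2)) > 0"
    using t u by (intro mult_pos_pos add_pos_pos divide_pos_pos) auto
  have R: "(1+t1^2)*(t0+t2) * (2*t2/(1+t2^2) * tri_p z i + 2*t0/(1+t0^2) * tri_p z (i+1) + 2*t1/(1+t1^2) * tri_p z (i-1)) > 0"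
    using t u S by (intro mult_pos_pos) auto
  note E = X_formula[OF t con, of "tri_p z i" "tri_p z (i+1)" "tri_p z (i-1)"]
  show ?thesis unfolding t0_def[symmetric] t1_def[symmetric] t2_def[symmetric]
    using E M R by (metis zero_less_mult_pos2)
qed

theorem mainTheorem12:
  fixes z :: tri
  assumes "is_triangle z"
  shows "\<exists>P'. (perimeter has_derivative P') (at z) \<and>
           dim {v. P' v = 0} = 5 \<and>
           span {xi 1 z, xi 2 z, xi 3 z, lie_bracket (xi 1) (xi 2) z, lie_bracket (xi 2) (xi 3) z}
             = {v. P' v = 0} \<and>
           span {xi 1 z, xi 2 z, xi 3 z, lie_bracket (xi 1) (xi 2) z, lie_bracket (xi 2) (xi 3) z,
                 lie_bracket (xi 3) (xi 1) z}
             = {v. P' v = 0}"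
proof -
  have tri: "is_triangle z" by (rule assms)
  have c: "\<And>k. cos (th z k / 2) \<noteq> 0" using tri_cos[OF tri] .
  have tp: "\<And>k. TT z k > 0" using tri_TT[OF tri] .
  have spos: "\<And>j k. TT z j + TT z k > 0" using tp by (simp add: add_pos_pos)
  then have sne: "\<And>j k. TT z j + TT z k \<noteq> 0" by (metis less_irrefl)
  define XX where "XX i = Xf (TT z i) (TT z (i+1)) (TT z (i-1)) (tri_p z i) (tri_p z (i+1)) (tri_p z (i-1))" for i
  define YY where "YY i = Yf (TT z i) (TT z (i+1)) (TT z (i-1)) (tri_p z i) (tri_p z (i+1)) (tri_p z (i-1))" for i
  have brk: "\<And>i. lie_bracket (xi i) (xi (i+1)) z = (0, XX i *\<^sub>R axis (i+1) 1 - YY i *\<^sub>R axis i 1)"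
    unfolding XX_def YY_def by (rule bracket[OF c c c sne sne])
  have rel: "\<And>i. (TT z (i+1) + TT z (i-1)) * XX i = (TT z i + TT z (i+1)) * YY i"
    unfolding XX_def YY_def by (rule XY_rel[OF sne sne])
  have Xp: "\<And>i. XX i > 0" unfolding XX_def by (rule X_pos[OF tri])
  have brK: "\<And>i. aa z \<bullet> lie_bracket (xi i) (xi (i+1)) z = 0"
    unfolding brk aa_br using rel by simp
  define br1 :: tri where "br1 = (0, XX 1 *\<^sub>R axis (2::3) 1 - YY 1 *\<^sub>R axis (1::3) 1)"
  define br2 :: tri where "br2 = (0, XX 2 *\<^sub>R axis (3::3) 1 - YY 2 *\<^sub>R axis (2::3) 1)"
  have br12: "lie_bracket (xi 1) (xi 2) z = br1" unfolding br1_def using brk[of 1] by simp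
  have br23: "lie_bracket (xi 2) (xi 3) z = br2" unfolding br2_def using brk[of 2] by simp
  have K12: "aa z \<bullet> br1 = 0" using brK[of 1] br12 by simp
  have K23: "aa z \<bullet> br2 = 0" using brK[of 2] br23 by simp
  have K31: "aa z \<bullet> lie_bracket (xi 3) (xi 1) z = 0" using brK[of 3] by (simp add: nums3)
  define K where "K = {v. aa z \<bullet> v = 0}"
  have subK: "subspace K" unfolding K_def by (rule subspace_hyperplane)
  have S5K: "{xi 1 z, xi 2 z, xi 3 z, br1, br2} \<subseteq> K"
    unfolding K_def using aa_xi[OF tri] K12 K23 by auto
  have KS5: "K \<subseteq> span {xi 1 z, xi 2 z, xi 3 z, br1, br2}"
  proof
    fix v assume "v \<in> K"
    then have hv: "aa z \<bullet> v = 0" unfolding K_def by simp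
    define q where "q k = snd v $ k - fst v $ k * Phi k z" for k
    have ax: "\<And>k. fst (aa z) $ k = - (TT z k + TT z (k+1)) * Phi k z"
    proof -
      fix k
      have "aa z \<bullet> xi k z = fst (aa z) $ k + (TT z k + TT z (k+1)) * Phi k z"
        unfolding xi_eq inner_prod_def by (simp add: inner_axis aa_def)
      then show "fst (aa z) $ k = - (TT z k + TT z (k+1)) * Phi k z" using aa_xi[OF tri, of k] by (simp add: algebra_simps)
    qed
    have ay: "\<And>k. snd (aa z) $ k = TT z k + TT z (k+1)" by (simp add: aa_def)
    have sumq: "(TT z 1 + TT z 2) * q 1 + (TT z 2 + TT z 3) * q 2 + (TT z 3 + TT z 1) * q 3 = 0"
      using hv unfolding inner_prod_def inner_vec_def sum_3 q_def
      by (simp add: ax ay nums3 algebra_simps)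
    have rel1: "(TT z 2 + TT z 3) * XX 1 = (TT z 1 + TT z 2) * YY 1" using rel[of 1] by (simp add: nums3)
    have rel2: "(TT z 3 + TT z 1) * XX 2 = (TT z 2 + TT z 3) * YY 2" using rel[of 2] by simp
    have Y1: "YY 1 \<noteq> 0"
    proof
      assume "YY 1 = 0"
      then have "(TT z 2 + TT z 3) * XX 1 = 0" using rel1 by simp
      then show False using spos[of 2 3] Xp[of 1] by simp
    qed
    have X2: "XX 2 \<noteq> 0" using Xp[of 2] by simp
    define lam where "lam = - q 1 / YY 1"
    define mu where "mu = q 3 / XX 2"
    have l1: "lam * YY 1 = - q 1" unfolding lam_def using Y1 by simp
    have m1: "mu * XX 2 = q 3" unfolding mu_def using X2 by simp
    have key: "lam * XX 1 - mu * YY 2 = q 2"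
    proof -
      have b2: "TT z 2 + TT z 3 \<noteq> 0" by (rule sne)
      have "XX 1 = (TT z 1 + TT z 2) * YY 1 / (TT z 2 + TT z 3)" using rel1 b2 by (simp add: field_simps)
      moreover have "YY 2 = (TT z 3 + TT z 1) * XX 2 / (TT z 2 + TT z 3)" using rel2 b2 by (simp add: field_simps)
      ultimately have "lam * XX 1 - mu * YY 2 = (- q 1 * (TT z 1 + TT z 2) - q 3 * (TT z 3 + TT z 1)) / (TT z 2 + TT z 3)"
        using l1 m1 b2 by (simp add: field_simps) algebra
      also have "\<dots> = q 2" using sumq b2 by (simp add: field_simps)
      finally show ?thesis .
    qed
    have veq: "v = fst v $ 1 *\<^sub>R xi 1 z + fst v $ 2 *\<^sub>R xi 2 z + fst v $ 3 *\<^sub>R xi 3 z + lam *\<^sub>R br1 + mu *\<^sub>R br2"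
    proof (rule prod_eqI)
      show "fst v = fst (fst v $ 1 *\<^sub>R xi 1 z + fst v $ 2 *\<^sub>R xi 2 z + fst v $ 3 *\<^sub>R xi 3 z + lam *\<^sub>R br1 + mu *\<^sub>R br2)"
        unfolding vec_eq_iff forall_3 by (simp add: xi_eq axis_def br1_def br2_def)
      have e1: "snd v $ 1 = fst v $ 1 * Phi 1 z - lam * YY 1" using l1 unfolding q_def by simp
      have e2: "snd v $ 2 = fst v $ 2 * Phi 2 z + (lam * XX 1 - mu * YY 2)" using key unfolding q_def by simp
      have e3: "snd v $ 3 = fst v $ 3 * Phi 3 z + mu * XX 2" using m1 unfolding q_def by simp
      show "snd v = snd (fst v $ 1 *\<^sub>R xi 1 z + fst v $ 2 *\<^sub>R xi 2 z + fst v $ 3 *\<^sub>R xi 3 z + lam *\<^sub>R br1 + mu *\<^sub>R br2)"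
        unfolding vec_eq_iff forall_3 using e1 e2 e3 by (simp add: xi_eq axis_def br1_def br2_def algebra_simps)
    qed
    show "v \<in> span {xi 1 z, xi 2 z, xi 3 z, br1, br2}"
      by (subst veq) (intro span_add span_scale span_base; simp)
  qed
  have aa_ne: "aa z \<noteq> 0"
  proof
    assume "aa z = 0"
    then have "snd (aa z) $ 1 = 0" by simp
    then show False using spos[of 1 2] by (simp add: aa_def)
  qed
  have span5: "span {xi 1 z, xi 2 z, xi 3 z, br1, br2} = K"
    by (rule span_subspace[OF S5K KS5 subK])
  have span6: "span {xi 1 z, xi 2 z, xi 3 z, br1, br2, lie_bracket (xi 3) (xi 1) z} = K"
  proof (rule span_subspace[OF _ _ subK])
    show "{xi 1 z, xi 2 z, xi 3 z, br1, br2, lie_bracket (xi 3) (xi 1) z} \<subseteq> K"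
      using S5K K31 unfolding K_def by auto
    show "K \<subseteq> span {xi 1 z, xi 2 z, xi 3 z, br1, br2, lie_bracket (xi 3) (xi 1) z}"
      using KS5 span_mono[of "{xi 1 z, xi 2 z, xi 3 z, br1, br2}" "{xi 1 z, xi 2 z, xi 3 z, br1, br2, lie_bracket (xi 3) (xi 1) z}"]
      by auto
  qed
  have dimK: "dim K = 5" unfolding K_def using dim_hyperplane[OF aa_ne] by simp
  show ?thesis
    apply (rule exI[of _ "\<lambda>v. aa z \<bullet> v"])
    using hd_perim[OF tri] dimK span5 span6 unfolding K_def br12 br23 by simp
qed

end
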